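(* Let $0<r<1$. For every measurable $f$ on $\Omega$, $$\mu(\{\mathcal{P}f>\lambda\})\le\frac1r\,\mu(\{|f|>\lambda\}),\qquad\lambda\ge0.$$ In particular, for $p\in(0,\infty)$, $\|\mathcal{P}\|_{L^p(\Omega)\to L^p(\Omega)}\le r^{-1/p}$.
   Context: $(\Omega,\mathcal{F},\mu)$ is a probability space with a filtration $\{\mathcal{F}_k\}_{k\ge0}$ whose union generates $\mathcal{F}$; $\mathsf{E}_k=\mathsf{E}[\cdot|\mathcal{F}_k]$. The $k$-th conditional percentile at ratio $r$ is $\mathsf{P}^r_kf(x):=\inf\{t\in\mathbb{Q}:\mathsf{E}_k[\mathbf{1}_{\{f>t\}}](x)\le r\}$, and $\mathcal{P}f:=\mathcal{P}_rf:=\sup_{k\ge0}\mathsf{P}^r_k|f|$. *)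

theory Defs
  imports "HOL-Probability.Probability"
begin

definition cond_percentile ::
  "'a measure \<Rightarrow> 'a measure \<Rightarrow> real \<Rightarrow> ('a \<Rightarrow> real) \<Rightarrow> 'a \<Rightarrow> ereal" where
  "cond_percentile M F r f x =
     Inf {ereal (real_of_rat t) | t.
            real_cond_exp M F (indicator {y \<in> space M. f y > real_of_rat t}) x \<le> r}"

definition max_percentile ::
  "'a measure \<Rightarrow> (nat \<Rightarrow> 'a measure) \<Rightarrow> real \<Rightarrow> ('a \<Rightarrow> real) \<Rightarrow> 'a \<Rightarrow> ereal" where
  "max_percentile M Fs r f x = (SUP k. cond_percentile M (Fs k) r (\<lambda>y. \<bar>f y\<bar>) x)"

definition ereal_abs_powr :: "ereal \<Rightarrow> real \<Rightarrow> ennreal" where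
  "ereal_abs_powr v p = (case \<bar>v\<bar> of ereal a \<Rightarrow> ennreal (a powr p) | _ \<Rightarrow> \<infinity>)"

end

theory Submission
  imports Defs
begin

lemma ereal_abs_powr_alt:
  "ereal_abs_powr v p = (if \<bar>v\<bar> = \<infinity> then \<infinity> else ennreal (real_of_ereal \<bar>v\<bar> powr p))"
  by (cases v) (auto simp: ereal_abs_powr_def)

lemma ereal_abs_powr_ereal: "ereal_abs_powr (ereal y) p = ennreal (\<bar>y\<bar> powr p)"
  by (simp add: ereal_abs_powr_def)

lemma real_less_powr_iff:
  fixes s a p :: real
  assumes "0 \<le> s" "0 \<le> a" "0 < p"
  shows "(s < a powr p) = (s powr (1/p) < a)"
proof
  assume "s < a powr p"
  then have "s powr (1/p) < (a powr p) powr (1/p)"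
    using assms by (intro powr_less_mono2) auto
  also have "\<dots> = a" using assms by (simp add: powr_powr)
  finally show "s powr (1/p) < a" .
next
  assume "s powr (1/p) < a"
  then have "(s powr (1/p)) powr p < a powr p"
    using assms by (intro powr_less_mono2) auto
  also have "(s powr (1/p)) powr p = s" using assms by (simp add: powr_powr)
  finally show "s < a powr p" .
qed

lemma less_abs_powr_iff:
  assumes "0 \<le> s" "0 < p"
  shows "(ennreal s < ereal_abs_powr v p) = (ereal (s powr (1/p)) < \<bar>v\<bar>)"
proof (cases v)
  case (real a)
  then show ?thesis using assms real_less_powr_iff[of s "\<bar>a\<bar>" p]
    by (simp add: ereal_abs_powr_def ennreal_less_iff)
qed (auto simp: ereal_abs_powr_def)

lemma emeasure_lborel_atLeast0: "emeasure lborel {0::real..} = \<infinity>"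
proof (rule ccontr)
  assume "emeasure lborel {0::real..} \<noteq> \<infinity>"
  then obtain a where a: "emeasure lborel {0::real..} = ennreal a" "0 \<le> a"
    by (metis ennreal_cases infinity_ennreal_def top.not_eq_extremum)
  have "emeasure lborel {0::real..<a+1} \<le> emeasure lborel {0::real..}"
    by (intro emeasure_mono) auto
  then have "ennreal (a+1) \<le> ennreal a" using a by (simp add: emeasure_lborel_Ico)
  then show False using a by (simp add: ennreal_le_iff)
qed

lemma layer_cake:
  assumes "sigma_finite_measure M" and [measurable]: "g \<in> borel_measurable M"
  shows "(\<integral>\<^sup>+x. g x \<partial>M) =
    (\<integral>\<^sup>+s. (\<integral>\<^sup>+x. (if 0 \<le> s \<and> ennreal s < g x then 1 else 0) \<partial>M) \<partial>lborel)"
proof -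
  interpret pair_sigma_finite M lborel
    using assms(1) by (simp add: pair_sigma_finite_def sigma_finite_lborel)
  have pt: "(\<integral>\<^sup>+s. (if 0 \<le> s \<and> ennreal s < g x then 1 else 0) \<partial>lborel) = g x" for x
  proof -
    have "(\<integral>\<^sup>+s. (if 0 \<le> s \<and> ennreal s < g x then 1 else 0) \<partial>lborel)
        = (\<integral>\<^sup>+s. indicator {s. 0 \<le> s \<and> ennreal s < g x} s \<partial>lborel)"
      by (intro nn_integral_cong) (auto simp: indicator_def)
    also have "\<dots> = emeasure lborel {s. 0 \<le> s \<and> ennreal s < g x}"
      by (intro nn_integral_indicator) measurable
    also have "\<dots> = g x"
    proof (cases "g x")
      case (real a)
      then have "{s. 0 \<le> s \<and> ennreal s < g x} = {0..<a}"
        by (auto simp: ennreal_less_iff)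
      then show ?thesis using real by (simp add: emeasure_lborel_Ico)
    next
      case top
      then have "{s. 0 \<le> s \<and> ennreal s < g x} = {0..}" by auto
      then show ?thesis using top emeasure_lborel_atLeast0 by simp
    qed
    finally show ?thesis .
  qed
  have "(\<integral>\<^sup>+s. (\<integral>\<^sup>+x. (if 0 \<le> s \<and> ennreal s < g x then 1 else 0) \<partial>M) \<partial>lborel)
      = (\<integral>\<^sup>+x. (\<integral>\<^sup>+s. (if 0 \<le> s \<and> ennreal s < g x then 1 else 0) \<partial>lborel) \<partial>M)"
    by (rule Fubini') measurable
  then show ?thesis by (simp add: pt)
qed


lemma inner_indicator_integral:
  "(\<integral>\<^sup>+x. (if 0 \<le> s \<and> ennreal s < g x then 1 else 0) \<partial>M) =
     (if 0 \<le> s then emeasure M {x\<in>space M. ennreal s < g x} else 0)"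
  if [measurable]: "g \<in> borel_measurable M"
proof (cases "0 \<le> s")
  case True
  have "(\<integral>\<^sup>+x. (if 0 \<le> s \<and> ennreal s < g x then 1 else 0) \<partial>M) =
     (\<integral>\<^sup>+x. indicator {x\<in>space M. ennreal s < g x} x \<partial>M)"
    using True by (intro nn_integral_cong) (auto simp: indicator_def)
  also have "\<dots> = emeasure M {x\<in>space M. ennreal s < g x}"
    by (intro nn_integral_indicator) measurable
  finally show ?thesis using True by simp
qed simp

lemma distrib_compare:
  assumes "sigma_finite_measure M" and [measurable]: "g \<in> borel_measurable M" "h \<in> borel_measurable M"
    and le: "\<And>s. 0 \<le> s \<Longrightarrow> emeasure M {x\<in>space M. ennreal s < g x} \<le> c * emeasure M {x\<in>space M. ennreal s < h x}"
  shows "(\<integral>\<^sup>+x. g x \<partial>M) \<le> c * (\<integral>\<^sup>+x. h x \<partial>M)"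
proof -
  have "(\<integral>\<^sup>+x. g x \<partial>M) =
    (\<integral>\<^sup>+s. (\<integral>\<^sup>+x. (if 0 \<le> s \<and> ennreal s < g x then 1 else 0) \<partial>M) \<partial>lborel)"
    by (rule layer_cake[OF assms(1,2)])
  also have "\<dots> \<le> (\<integral>\<^sup>+s. c * (\<integral>\<^sup>+x. (if 0 \<le> s \<and> ennreal s < h x then 1 else 0) \<partial>M) \<partial>lborel)"
    by (intro nn_integral_mono) (simp add: inner_indicator_integral le)
  also have "\<dots> = c * (\<integral>\<^sup>+s. (\<integral>\<^sup>+x. (if 0 \<le> s \<and> ennreal s < h x then 1 else 0) \<partial>M) \<partial>lborel)"
  proof (rule nn_integral_cmult)
    interpret pair_sigma_finite M lborel
      using assms(1) by (simp add: pair_sigma_finite_def sigma_finite_lborel)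
    show "(\<lambda>s. \<integral>\<^sup>+x. (if 0 \<le> s \<and> ennreal s < h x then 1 else 0) \<partial>M) \<in> borel_measurable lborel"
      by (rule sigma_finite_measure.borel_measurable_nn_integral[OF assms(1)]) measurable
  qed
  also have "\<dots> = c * (\<integral>\<^sup>+x. h x \<partial>M)"
    using layer_cake[OF assms(1,3)] by simp
  finally show ?thesis .
qed

lemma cond_percentile_INF:
  "cond_percentile M F r g x =
    (INF t. if real_cond_exp M F (indicator {y \<in> space M. g y > real_of_rat t}) x \<le> r
            then ereal (real_of_rat t) else \<infinity>)"
  unfolding cond_percentile_def
proof (rule antisym)
  show "Inf {ereal (real_of_rat t) |t. real_cond_exp M F (indicator {y \<in> space M. real_of_rat t < g y}) x \<le> r}
    \<le> (INF t. if real_cond_exp M F (indicator {y \<in> space M. real_of_rat t < g y}) x \<le> r then ereal (real_of_rat t) else \<infinity>)"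
    by (rule INF_greatest) (auto intro: Inf_lower)
  show "(INF t. if real_cond_exp M F (indicator {y \<in> space M. real_of_rat t < g y}) x \<le> r then ereal (real_of_rat t) else \<infinity>)
     \<le> Inf {ereal (real_of_rat t) |t. real_cond_exp M F (indicator {y \<in> space M. real_of_rat t < g y}) x \<le> r}"
  proof (rule Inf_greatest, clarify)
    fix t assume "real_cond_exp M F (indicator {y \<in> space M. real_of_rat t < g y}) x \<le> r"
    then show "(INF t. if real_cond_exp M F (indicator {y \<in> space M. real_of_rat t < g y}) x \<le> r then ereal (real_of_rat t) else \<infinity>)
       \<le> ereal (real_of_rat t)"
      by (intro INF_lower2[of t]) auto
  qed
qed

lemma max_percentile_measurable:
  "max_percentile M Fs r f \<in> borel_measurable M"
  unfolding max_percentile_def cond_percentile_INF by measurable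


lemma core:
  fixes M :: "'a measure" and Fs :: "nat \<Rightarrow> 'a measure" and r :: real
    and f :: "'a \<Rightarrow> real"
  assumes "prob_space M"
    and subalg: "\<And>k. subalgebra M (Fs k)"
    and mono: "\<And>k. sets (Fs k) \<subseteq> sets (Fs (Suc k))"
    and "0 < r" and "r < 1"
    and [measurable]: "f \<in> borel_measurable M"
    and "0 \<le> lam"
  shows "emeasure M {x\<in>space M. ereal lam < \<bar>max_percentile M Fs r f x\<bar>}
     \<le> ennreal (1/r) * emeasure M {x\<in>space M. lam < \<bar>f x\<bar>}"
proof -
  interpret prob_space M by fact
  have sfs: "sigma_finite_subalgebra M (Fs k)" for k
    by (rule finite_measure_subalgebra_is_sigma_finite)
       (simp add: finite_measure_subalgebra_def finite_measure_subalgebra_axioms_def subalg finite_measure_axioms)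
  define A where "A = {x\<in>space M. lam < \<bar>f x\<bar>}"
  have A_sets[measurable]: "A \<in> sets M" unfolding A_def by measurable
  define g where "g k = real_cond_exp M (Fs k) (indicator A)" for k
  define h where "h k t = real_cond_exp M (Fs k) (indicator {y\<in>space M. real_of_rat t < \<bar>f y\<bar>})" for k t
  have intI: "integrable M (indicator B :: 'a \<Rightarrow> real)" if "B \<in> sets M" for B
    using that by (intro integrable_real_indicator) (auto simp: emeasure_eq_measure)
  have AE1: "AE x in M. \<forall>k t. lam < real_of_rat t \<longrightarrow> h k t x \<le> g k x"
  proof -
    have "AE x in M. lam < real_of_rat t \<longrightarrow> h k t x \<le> g k x" for k t
    proof (cases "lam < real_of_rat t")
      case True
      have "AE x in M. h k t x \<le> g k x"
        unfolding h_def g_def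
        by (rule sigma_finite_subalgebra.real_cond_exp_mono[OF sfs])
           (use True in \<open>auto simp: A_def indicator_def intro!: intI\<close>)
      then show ?thesis by auto
    qed simp
    then show ?thesis by (simp add: AE_all_countable)
  qed
  have AE2: "AE x in M. \<forall>k t. real_of_rat t < 0 \<longrightarrow> 1 \<le> h k t x"
  proof -
    have "AE x in M. real_of_rat t < 0 \<longrightarrow> 1 \<le> h k t x" for k t
    proof (cases "real_of_rat t < 0")
      case True
      have lt0: "real_of_rat t < \<bar>f y\<bar>" for y using True abs_ge_zero[of "f y"] by linarith
      have "AE x in M. 1 \<le> h k t x"
        unfolding h_def
        by (rule sigma_finite_subalgebra.real_cond_exp_ge_c[OF sfs])
           (auto simp: indicator_def lt0 intro!: intI)
      then show ?thesis by auto
    qed simp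
    then show ?thesis by (simp add: AE_all_countable)
  qed
  define E where "E k = {x\<in>space M. r < g k x}" for k
  have P0: "0 \<le> max_percentile M Fs r f x"
    if "\<forall>k t. real_of_rat t < 0 \<longrightarrow> 1 \<le> h k t x" for x
  proof -
    have "0 \<le> cond_percentile M (Fs 0) r (\<lambda>y. \<bar>f y\<bar>) x"
      unfolding cond_percentile_def
    proof (rule Inf_greatest, clarify)
      fix t assume t: "real_cond_exp M (Fs 0) (indicator {y \<in> space M. real_of_rat t < \<bar>f y\<bar>}) x \<le> r"
      show "0 \<le> ereal (real_of_rat t)"
      proof (rule ccontr)
        assume "\<not> 0 \<le> ereal (real_of_rat t)"
        then have "1 \<le> h 0 t x" using that by auto
        then show False using t \<open>r < 1\<close> by (simp add: h_def)
      qed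
    qed
    also have "\<dots> \<le> max_percentile M Fs r f x"
      unfolding max_percentile_def by (rule SUP_upper) simp
    finally show ?thesis .
  qed
  have P1: "\<exists>k. x \<in> E k"
    if x: "x \<in> space M" "\<forall>k t. lam < real_of_rat t \<longrightarrow> h k t x \<le> g k x"
      and lt: "ereal lam < max_percentile M Fs r f x" for x
  proof -
    obtain k where k: "ereal lam < cond_percentile M (Fs k) r (\<lambda>y. \<bar>f y\<bar>) x"
      using lt unfolding max_percentile_def by (auto simp: less_SUP_iff)
    obtain b where b: "ereal lam < ereal b" "ereal b < cond_percentile M (Fs k) r (\<lambda>y. \<bar>f y\<bar>) x"
      using ereal_dense2[OF k] by blast
    obtain q where q: "q \<in> \<rat>" "lam < q" "q < b"
      using Rats_dense_in_real[of lam b] b by auto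
    obtain t where t: "q = real_of_rat t" using q(1) by (auto elim: Rats_cases)
    have "\<not> h k t x \<le> r"
    proof
      assume "h k t x \<le> r"
      then have "cond_percentile M (Fs k) r (\<lambda>y. \<bar>f y\<bar>) x \<le> ereal (real_of_rat t)"
        unfolding cond_percentile_def h_def by (intro Inf_lower) auto
      moreover have "ereal (real_of_rat t) < ereal b" using q t by simp
      ultimately show False using b(2) by (meson leD less_trans)
    qed
    moreover have "h k t x \<le> g k x" using x(2) q t by blast
    ultimately have "r < g k x" by linarith
    then show ?thesis using x by (auto simp: E_def)
  qed
  from AE_E[OF AE_conjI[OF AE1 AE2]] obtain N where
    N: "{x \<in> space M. \<not> ((\<forall>k t. lam < real_of_rat t \<longrightarrow> h k t x \<le> g k x) \<and>
                       (\<forall>k t. real_of_rat t < 0 \<longrightarrow> 1 \<le> h k t x))} \<subseteq> N"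
       "emeasure M N = 0" "N \<in> sets M" by blast
  have incl: "{x\<in>space M. ereal lam < \<bar>max_percentile M Fs r f x\<bar>} \<subseteq> N \<union> (\<Union>k. E k)"
  proof (rule subsetI)
    fix x assume "x \<in> {x\<in>space M. ereal lam < \<bar>max_percentile M Fs r f x\<bar>}"
    then have x: "x \<in> space M" "ereal lam < \<bar>max_percentile M Fs r f x\<bar>" by auto
    show "x \<in> N \<union> (\<Union>k. E k)"
    proof (cases "x \<in> N")
      case False
      note x = x False
    then have good: "\<forall>k t. lam < real_of_rat t \<longrightarrow> h k t x \<le> g k x"
        "\<forall>k t. real_of_rat t < 0 \<longrightarrow> 1 \<le> h k t x" using N(1) by auto
    then have "\<bar>max_percentile M Fs r f x\<bar> = max_percentile M Fs r f x"
      using P0 by (simp add: abs_ereal_pos)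
    then show ?thesis using P1[OF x(1) good(1)] x(2) by auto
    qed simp
  qed
  have g_meas: "g k \<in> borel_measurable (Fs k)" for k unfolding g_def by simp
  have space_eq: "space (Fs k) = space M" for k using subalg[of k] by (simp add: subalgebra_def)
  have sets_sub: "sets (Fs k) \<subseteq> sets M" for k using subalg[of k] by (simp add: subalgebra_def)
  have sets_mono: "sets (Fs j) \<subseteq> sets (Fs k)" if "j \<le> k" for j k
    using lift_Suc_mono_le[of "\<lambda>k. sets (Fs k)", OF mono that] .
  have E_F: "E j \<in> sets (Fs j)" for j
  proof -
    have "E j = {x\<in>space (Fs j). r < g j x}" by (simp add: E_def space_eq)
    also have "\<dots> \<in> sets (Fs j)" using g_meas[of j] by measurable
    finally show ?thesis .
  qed
  define D where "D = disjointed E"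
  have D_F: "D k \<in> sets (Fs k)" for k
    unfolding D_def disjointed_def
    using E_F by (intro sets.Diff sets.finite_UN) (auto intro!: subsetD[OF sets_mono E_F])
  have D_M[measurable]: "D k \<in> sets M" for k using D_F sets_sub by blast
  have D_E: "D k \<subseteq> E k" for k unfolding D_def by (rule disjointed_subset)
  have key: "r * measure M (D k) \<le> measure M (D k \<inter> A)" for k
  proof -
    have "r * measure M (D k) = (\<integral>x. indicator (D k) x * r \<partial>M)"
      by (simp add: emeasure_eq_measure)
    also have "\<dots> \<le> (\<integral>x. indicator (D k) x * g k x \<partial>M)"
    proof (rule integral_mono)
      show "integrable M (\<lambda>x. indicator (D k) x * r)" using intI[OF D_M[of k]] by simp
      have "integrable M (g k)" unfolding g_def
        by (rule sigma_finite_subalgebra.real_cond_exp_int(1)[OF sfs intI[OF A_sets]])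
      then show "integrable M (\<lambda>x. indicator (D k) x * g k x)"
        using integrable_mult_indicator[OF D_M[of k], of "g k"] by simp
      show "indicator (D k) x * r \<le> indicator (D k) x * g k x" for x
        using D_E[of k] by (auto simp: indicator_def E_def)
    qed
    also have "\<dots> = (\<integral>x\<in>D k. g k x \<partial>M)" by (simp add: set_lebesgue_integral_def)
    also have "\<dots> = (\<integral>x\<in>D k. indicator A x \<partial>M)" unfolding g_def
      by (rule sigma_finite_subalgebra.real_cond_exp_intA[OF sfs intI[OF A_sets] D_F, symmetric])
    also have "\<dots> = (\<integral>x. indicator (D k \<inter> A) x \<partial>M)"
      by (simp add: set_lebesgue_integral_def indicator_inter_arith)
    also have "\<dots> = measure M (D k \<inter> A)" by simp
    finally show ?thesis .
  qed
  have s1: "(\<lambda>k. r * measure M (D k)) sums (r * measure M (\<Union>k. E k))"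
  proof -
    have "(\<lambda>k. measure M (D k)) sums measure M (\<Union>k. D k)"
      by (rule finite_measure_UNION) (use D_M in \<open>auto simp: D_def disjoint_family_disjointed\<close>)
    then show ?thesis unfolding D_def UN_disjointed_eq by (rule sums_mult)
  qed
  have s2: "(\<lambda>k. measure M (D k \<inter> A)) sums measure M (\<Union>k. D k \<inter> A)"
  proof (rule finite_measure_UNION)
    show "disjoint_family (\<lambda>k. D k \<inter> A)"
      using disjoint_family_disjointed[of E] unfolding D_def disjoint_family_on_def by blast
  qed auto
  have "r * measure M (\<Union>k. E k) \<le> measure M (\<Union>k. D k \<inter> A)"
    using sums_le[OF _ s1 s2] key by blast
  also have "\<dots> \<le> measure M A" by (intro finite_measure_mono) auto
  finally have doob: "measure M (\<Union>k. E k) \<le> (1/r) * measure M A"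
    using \<open>0 < r\<close> by (simp add: field_simps)
  have E_M[measurable]: "E k \<in> sets M" for k using E_F sets_sub by blast
  have "emeasure M {x\<in>space M. ereal lam < \<bar>max_percentile M Fs r f x\<bar>} \<le> emeasure M (N \<union> (\<Union>k. E k))"
    using incl N(3) by (intro emeasure_mono) auto
  also have "\<dots> \<le> emeasure M N + emeasure M (\<Union>k. E k)"
    using N(3) by (intro emeasure_subadditive) auto
  also have "\<dots> = ennreal (measure M (\<Union>k. E k))" using N(2) by (simp add: emeasure_eq_measure)
  also have "\<dots> \<le> ennreal ((1/r) * measure M A)" using doob by (rule ennreal_leI)
  also have "\<dots> = ennreal (1/r) * emeasure M A"
    using \<open>0 < r\<close> by (simp add: emeasure_eq_measure ennreal_mult[symmetric])
  finally show ?thesis unfolding A_def .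
qed


theorem lemma1p1:
  fixes M :: "'a measure" and Fs :: "nat \<Rightarrow> 'a measure" and r :: real
    and f :: "'a \<Rightarrow> real"
  assumes "prob_space M"
    and "\<And>k. subalgebra M (Fs k)"
    and "\<And>k. sets (Fs k) \<subseteq> sets (Fs (Suc k))"
    and "sets M = sigma_sets (space M) (\<Union>k. sets (Fs k))"
    and "0 < r" and "r < 1"
    and "f \<in> borel_measurable M"
  shows "(\<forall>lam::real. lam \<ge> 0 \<longrightarrow>
            measure M {x \<in> space M. max_percentile M Fs r f x > ereal lam}
              \<le> (1 / r) * measure M {x \<in> space M. \<bar>f x\<bar> > lam})
       \<and> (\<forall>p::real. p > 0 \<longrightarrow>
            (\<integral>\<^sup>+ x. ereal_abs_powr (max_percentile M Fs r f x) p \<partial>M)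
              \<le> ennreal (1 / r) * (\<integral>\<^sup>+ x. ennreal (\<bar>f x\<bar> powr p) \<partial>M))"
proof -
  interpret prob_space M by fact
  note core' = core[of M Fs r f, OF assms(1,2,3,5,6,7)]
  have [measurable]: "f \<in> borel_measurable M" by fact
  have Pm[measurable]: "max_percentile M Fs r f \<in> borel_measurable M"
    by (rule max_percentile_measurable)
  have part1: "measure M {x \<in> space M. max_percentile M Fs r f x > ereal lam}
              \<le> (1 / r) * measure M {x \<in> space M. \<bar>f x\<bar> > lam}" if lam: "lam \<ge> 0" for lam
  proof -
    have "measure M {x \<in> space M. max_percentile M Fs r f x > ereal lam}
        \<le> measure M {x\<in>space M. ereal lam < \<bar>max_percentile M Fs r f x\<bar>}"
    proof (rule finite_measure_mono)
      show "{x \<in> space M. max_percentile M Fs r f x > ereal lam}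
        \<subseteq> {x\<in>space M. ereal lam < \<bar>max_percentile M Fs r f x\<bar>}"
      proof clarify
        fix x assume "x \<in> space M" "ereal lam < max_percentile M Fs r f x"
        moreover then have "0 \<le> max_percentile M Fs r f x" using lam
          by (meson ereal_less_eq(5) le_less_trans less_imp_le)
        ultimately show "ereal lam < \<bar>max_percentile M Fs r f x\<bar>" by (simp add: abs_ereal_pos)
      qed
    qed measurable
    also have "\<dots> \<le> (1 / r) * measure M {x \<in> space M. \<bar>f x\<bar> > lam}"
    proof -
      have "ennreal (measure M {x\<in>space M. ereal lam < \<bar>max_percentile M Fs r f x\<bar>})
          \<le> ennreal (1/r) * ennreal (measure M {x \<in> space M. \<bar>f x\<bar> > lam})"
        using core'[OF lam] by (simp add: emeasure_eq_measure)
      also have "\<dots> = ennreal ((1/r) * measure M {x \<in> space M. \<bar>f x\<bar> > lam})"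
        using assms(5) by (simp add: ennreal_mult[symmetric])
      finally show ?thesis using assms(5) by (simp add: ennreal_le_iff)
    qed
    finally show ?thesis .
  qed
  have part2: "(\<integral>\<^sup>+ x. ereal_abs_powr (max_percentile M Fs r f x) p \<partial>M)
              \<le> ennreal (1 / r) * (\<integral>\<^sup>+ x. ennreal (\<bar>f x\<bar> powr p) \<partial>M)" if p: "p > 0" for p
  proof (rule distrib_compare)
    show "sigma_finite_measure M" by (rule sigma_finite_measure_axioms)
    show "(\<lambda>x. ereal_abs_powr (max_percentile M Fs r f x) p) \<in> borel_measurable M"
      unfolding ereal_abs_powr_alt by measurable
    show "(\<lambda>x. ennreal (\<bar>f x\<bar> powr p)) \<in> borel_measurable M" by measurable
    fix s :: real assume s: "0 \<le> s"
    have e1: "{x\<in>space M. ennreal s < ereal_abs_powr (max_percentile M Fs r f x) p}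
        = {x\<in>space M. ereal (s powr (1/p)) < \<bar>max_percentile M Fs r f x\<bar>}"
      using less_abs_powr_iff[OF s p] by simp
    have e2: "{x\<in>space M. ennreal s < ennreal (\<bar>f x\<bar> powr p)}
        = {x\<in>space M. s powr (1/p) < \<bar>f x\<bar>}"
      using less_abs_powr_iff[OF s p, of "ereal (f _)"] by (simp add: ereal_abs_powr_ereal)
    show "emeasure M {x\<in>space M. ennreal s < ereal_abs_powr (max_percentile M Fs r f x) p}
        \<le> ennreal (1/r) * emeasure M {x\<in>space M. ennreal s < ennreal (\<bar>f x\<bar> powr p)}"
      unfolding e1 e2 by (rule core') simp
  qed
  show ?thesis using part1 part2 by blast
qed

end
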